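(* Let $M\in\mathbb R_{>0}^{\mathbb N}$ and let $U\subseteq\mathbb R^p$, $V\subseteq\mathbb R^q$, $W\subseteq\mathbb R^r$ be open. (1) If $g\in\mathcal E^{(M)}(U,V)$ and $f\in\mathcal E^{(M)}(V,W)$ then $f\circ g\in\mathcal E^{(M^\circ)}(U,W)$; likewise, if $g\in\mathcal E^{\{M\}}(U,V)$ and $f\in\mathcal E^{\{M\}}(V,W)$ then $f\circ g\in\mathcal E^{\{M^\circ\}}(U,W)$. (2) If $M$ has the (FdB)-property, then $\mathcal E^{(M)}$ and $\mathcal E^{\{M\}}$ are stable under composition.
   Context: For $N\in\mathbb R_{>0}^{\mathbb N}$, open $U\subseteq\mathbb R^n$, compact $K$, $\rho>0$: $\|f\|^N_{K,\rho}:=\sup\{\|f^{(k)}(x)\|/(k!\rho^kN_k):x\in K,k\in\mathbb N\}$ ($f^{(k)}$ the $k$-th Fréchet derivative). $\mathcal E^{(N)}(U,V)$: smooth $f:U\to V$ with $\|f\|^N_{K,\rho}<\infty$ for all compact $K\subseteq U$ and all $\rho>0$; $\mathcal E^{\{N\}}(U,V)$: for every compact $K$ some $\rho>0$. $M^\circ_k:=\max\{M_jM_{\alpha_1}\cdots M_{\alpha_j}:\alpha_i\in\mathbb N_{>0},\alpha_1+\dots+\alpha_j=k\}$ for $k\ge1$, $M^\circ_0:=1$. $M$ has the (FdB)-property if $\exists C>0$ with $M_jM_{\alpha_1}\cdots M_{\alpha_j}\le C^kM_k$ for all $\alpha_i\in\mathbb N_{>0}$, $\alpha_1+\dots+\alpha_j=k$.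 A class is stable under composition if $g\in\mathcal E(U,V),f\in\mathcal E(V,W)\Rightarrow f\circ g\in\mathcal E(U,W)$ for all open $U,V,W$ in Euclidean spaces. *)

theory Defs
  imports "HOL-Analysis.Analysis"
begin

text \<open>Iterated Frechet derivative evaluated on a list of directions:
  higher_deriv k f x [v1,...,vk] = f^(k)(x)(v1,...,vk).\<close>
fun higher_deriv :: "nat \<Rightarrow> ('a::real_normed_vector \<Rightarrow> 'b::real_normed_vector) \<Rightarrow> 'a \<Rightarrow> 'a list \<Rightarrow> 'b" where
  "higher_deriv 0 f x vs = f x"
| "higher_deriv (Suc k) f x vs =
     frechet_derivative (\<lambda>y. higher_deriv k f y (tl vs)) (at x) (hd vs)"

definition smooth_on_set :: "'a::real_normed_vector set \<Rightarrow> ('a \<Rightarrow> 'b::real_normed_vector) \<Rightarrow> bool" where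
  "smooth_on_set U f \<longleftrightarrow>
     (\<forall>k vs x. length vs = k \<and> x \<in> U \<longrightarrow> (\<lambda>y. higher_deriv k f y vs) differentiable (at x))"

definition deriv_norm :: "nat \<Rightarrow> ('a::real_normed_vector \<Rightarrow> 'b::real_normed_vector) \<Rightarrow> 'a \<Rightarrow> real" where
  "deriv_norm k f x = Sup {norm (higher_deriv k f x vs) | vs. length vs = k \<and> (\<forall>v\<in>set vs. norm v \<le> 1)}"

definition seminorm_finite :: "(nat \<Rightarrow> real) \<Rightarrow> 'a::real_normed_vector set \<Rightarrow> real \<Rightarrow> ('a \<Rightarrow> 'b::real_normed_vector) \<Rightarrow> bool" where
  "seminorm_finite N K \<rho> f \<longleftrightarrow>
     bdd_above {deriv_norm k f x / (fact k * \<rho> ^ k * N k) | x k. x \<in> K}"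

definition beurling_class :: "(nat \<Rightarrow> real) \<Rightarrow> 'a::euclidean_space set \<Rightarrow> 'b::euclidean_space set \<Rightarrow> ('a \<Rightarrow> 'b) \<Rightarrow> bool" where
  "beurling_class N U V f \<longleftrightarrow> f ` U \<subseteq> V \<and> smooth_on_set U f \<and>
     (\<forall>K. compact K \<and> K \<subseteq> U \<longrightarrow> (\<forall>\<rho>>0. seminorm_finite N K \<rho> f))"

definition roumieu_class :: "(nat \<Rightarrow> real) \<Rightarrow> 'a::euclidean_space set \<Rightarrow> 'b::euclidean_space set \<Rightarrow> ('a \<Rightarrow> 'b) \<Rightarrow> bool" where
  "roumieu_class N U V f \<longleftrightarrow> f ` U \<subseteq> V \<and> smooth_on_set U f \<and>
     (\<forall>K. compact K \<and> K \<subseteq> U \<longrightarrow> (\<exists>\<rho>>0. seminorm_finite N K \<rho> f))"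

definition comp_seq :: "(nat \<Rightarrow> real) \<Rightarrow> nat \<Rightarrow> real" where
  "comp_seq M k = (if k = 0 then 1 else
     Max {M (length as) * prod_list (map M as) | as. (\<forall>a\<in>set as. 0 < a) \<and> sum_list as = k})"

definition FdB_property :: "(nat \<Rightarrow> real) \<Rightarrow> bool" where
  "FdB_property M \<longleftrightarrow> (\<exists>C>0. \<forall>k as. (\<forall>a\<in>set as. 0 < a) \<and> sum_list as = k \<longrightarrow>
      M (length as) * prod_list (map M as) \<le> C ^ k * M k)"

end

theory Submission
  imports Defs
begin


fun mlin :: "nat \<Rightarrow> ('a::real_normed_vector list \<Rightarrow> 'b::real_normed_vector) \<Rightarrow> bool" where
  "mlin 0 F = True"
| "mlin (Suc j) F = ((\<forall>ws. length ws = j \<longrightarrow> linear (\<lambda>w. F (w # ws))) \<and> (\<forall>w. mlin j (\<lambda>ws. F (w # ws))))"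

lemma lin_expand:
  fixes h :: "'a::euclidean_space \<Rightarrow> 'b::real_normed_vector"
  assumes "linear h" shows "h w = (\<Sum>b\<in>Basis. (w \<bullet> b) *\<^sub>R h b)"
proof -
  have "h w = h (\<Sum>b\<in>Basis. (w \<bullet> b) *\<^sub>R b)" by (simp add: euclidean_representation)
  also have "\<dots> = (\<Sum>b\<in>Basis. (w \<bullet> b) *\<^sub>R h b)"
    using assms by (simp add: linear_sum linear_scale)
  finally show ?thesis .
qed

lemma mlin_bounded:
  fixes F :: "'a::euclidean_space list \<Rightarrow> 'b::real_normed_vector"
  assumes "mlin j F"
  shows "\<exists>K. \<forall>ws. length ws = j \<and> (\<forall>w\<in>set ws. norm w \<le> 1) \<longrightarrow> norm (F ws) \<le> K"
  using assms
proof (induction j arbitrary: F)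
  case 0
  show ?case by (rule exI[of _ "norm (F [])"]) auto
next
  case (Suc j)
  have "\<forall>b. \<exists>K. \<forall>ws. length ws = j \<and> (\<forall>w\<in>set ws. norm w \<le> 1) \<longrightarrow> norm (F (b # ws)) \<le> K"
    using Suc by auto
  then obtain K where K: "\<And>b ws. length ws = j \<Longrightarrow> (\<forall>w\<in>set ws. norm w \<le> 1) \<Longrightarrow> norm (F (b # ws)) \<le> K b"
    by metis
  show ?case
  proof (rule exI[of _ "\<Sum>b\<in>Basis. K b"], intro allI impI)
    fix ws :: "'a list" assume a: "length ws = Suc j \<and> (\<forall>w\<in>set ws. norm w \<le> 1)"
    then obtain w ws' where ws: "ws = w # ws'" by (cases ws) auto
    have lin: "linear (\<lambda>w. F (w # ws'))" using Suc.prems a ws by auto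
    have "norm (F ws) = norm (\<Sum>b\<in>Basis. (w \<bullet> b) *\<^sub>R F (b # ws'))"
      using lin_expand[OF lin, of w] ws by simp
    also have "\<dots> \<le> (\<Sum>b\<in>Basis. norm ((w \<bullet> b) *\<^sub>R F (b # ws')))" by (rule norm_sum)
    also have "\<dots> \<le> (\<Sum>b\<in>Basis. K b)"
    proof (rule sum_mono)
      fix b :: 'a assume b: "b \<in> Basis"
      have "\<bar>w \<bullet> b\<bar> \<le> 1" using Basis_le_norm[OF b, of w] a ws by auto
      moreover have "norm (F (b # ws')) \<le> K b" using K[of ws' b] a ws by auto
      ultimately show "norm ((w \<bullet> b) *\<^sub>R F (b # ws')) \<le> K b"
        by (simp add: mult_le_one) (metis abs_ge_zero mult_left_le_one_le norm_ge_zero order.trans)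
    qed
    finally show "norm (F ws) \<le> (\<Sum>b\<in>Basis. K b)" .
  qed
qed

lemma mlin_homog:
  fixes F :: "'a::real_normed_vector list \<Rightarrow> 'b::real_normed_vector"
  assumes "mlin j F"
    and "\<And>ws. length ws = j \<Longrightarrow> (\<forall>w\<in>set ws. norm w \<le> 1) \<Longrightarrow> norm (F ws) \<le> D"
    and "length ws = j"
  shows "norm (F ws) \<le> D * prod_list (map norm ws)"
  using assms
proof (induction j arbitrary: F ws)
  case 0
  then show ?case by auto
next
  case (Suc j)
  then obtain w ws' where ws: "ws = w # ws'" by (cases ws) auto
  have lin: "linear (\<lambda>w. F (w # ws'))" using Suc.prems ws by auto
  show ?case
  proof (cases "w = 0")
    case True
    have "F (w # ws') = 0" using True linear_0[OF lin] by simp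
    then show ?thesis using ws True by simp
  next
    case False
    define u where "u = w /\<^sub>R norm w"
    have nu: "norm u = 1" using False by (simp add: u_def)
    have m: "mlin j (\<lambda>ws. F (u # ws))" using Suc.prems by simp
    have "norm (F (u # ws')) \<le> D * prod_list (map norm ws')"
      apply (rule Suc.IH[OF m])
      using Suc.prems(2)[of "u # _"] nu ws Suc.prems(3) by auto
    moreover have "F (w # ws') = norm w *\<^sub>R F (u # ws')"
      using linear_scale[OF lin, of "norm w" u] False by (simp add: u_def)
    ultimately show ?thesis using ws
      by (simp add: mult_left_mono) (metis mult.left_commute mult_left_mono norm_ge_zero)
  qed
qed

lemma deriv_mlin:
  fixes H :: "'a::real_normed_vector \<Rightarrow> 'b::real_normed_vector list \<Rightarrow> 'c::real_normed_vector"
  assumes "open V" "y \<in> V" "\<forall>z\<in>V. mlin j (H z)"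
    and "\<forall>ws. length ws = j \<longrightarrow> (\<lambda>z. H z ws) differentiable (at y)"
  shows "mlin j (\<lambda>ws. frechet_derivative (\<lambda>z. H z ws) (at y) v)"
  using assms(3,4)
proof (induction j arbitrary: H)
  case 0
  then show ?case by simp
next
  case (Suc j)
  have lin: "linear (\<lambda>w. frechet_derivative (\<lambda>z. H z (w # ws)) (at y) v)" if len: "length ws = j" for ws
  proof -
    have D: "((\<lambda>z. H z (w # ws)) has_derivative frechet_derivative (\<lambda>z. H z (w # ws)) (at y)) (at y)" for w
      using Suc.prems(2) len frechet_derivative_works by (metis length_Cons)
    have L: "linear (\<lambda>w. H z (w # ws))" if "z \<in> V" for z using Suc.prems(1) that len by auto
    show ?thesis
    proof (rule linearI)
      fix b1 b2
      have "((\<lambda>z. H z (b1 # ws) + H z (b2 # ws)) has_derivative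
         (\<lambda>h. frechet_derivative (\<lambda>z. H z (b1 # ws)) (at y) h + frechet_derivative (\<lambda>z. H z (b2 # ws)) (at y) h)) (at y)"
        by (intro has_derivative_add D)
      then have "((\<lambda>z. H z ((b1 + b2) # ws)) has_derivative
         (\<lambda>h. frechet_derivative (\<lambda>z. H z (b1 # ws)) (at y) h + frechet_derivative (\<lambda>z. H z (b2 # ws)) (at y) h)) (at y)"
        by (rule has_derivative_transform_within_open[OF _ assms(1,2)]) (simp add: linear_add[OF L])
      from has_derivative_unique[OF D this] show "frechet_derivative (\<lambda>z. H z ((b1 + b2) # ws)) (at y) v =
         frechet_derivative (\<lambda>z. H z (b1 # ws)) (at y) v + frechet_derivative (\<lambda>z. H z (b2 # ws)) (at y) v"
        by metis
    next
      fix r b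
      have "((\<lambda>z. r *\<^sub>R H z (b # ws)) has_derivative
         (\<lambda>h. r *\<^sub>R frechet_derivative (\<lambda>z. H z (b # ws)) (at y) h)) (at y)"
        by (intro has_derivative_scaleR_right D)
      then have "((\<lambda>z. H z ((r *\<^sub>R b) # ws)) has_derivative
         (\<lambda>h. r *\<^sub>R frechet_derivative (\<lambda>z. H z (b # ws)) (at y) h)) (at y)"
        by (rule has_derivative_transform_within_open[OF _ assms(1,2)]) (simp add: linear_scale[OF L])
      from has_derivative_unique[OF D this] show "frechet_derivative (\<lambda>z. H z ((r *\<^sub>R b) # ws)) (at y) v =
         r *\<^sub>R frechet_derivative (\<lambda>z. H z (b # ws)) (at y) v"
        by metis
    qed
  qed
  have "mlin j (\<lambda>ws. frechet_derivative (\<lambda>z. H z (w # ws)) (at y) v)" for w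
    using Suc.IH[of "\<lambda>z ws. H z (w # ws)"] Suc.prems by auto
  then show ?case using lin by simp
qed

lemma hd_mlin:
  assumes "smooth_on_set V f" "open V" "y \<in> V"
  shows "mlin k (higher_deriv k f y)"
  using assms(3)
proof (induction k arbitrary: y)
  case 0
  then show ?case by simp
next
  case (Suc k)
  have lin: "linear (\<lambda>w. higher_deriv (Suc k) f y (w # ws))" if "length ws = k" for ws
  proof -
    have "(\<lambda>z. higher_deriv k f z ws) differentiable (at y)"
      using assms(1) Suc.prems that unfolding smooth_on_set_def by blast
    then show ?thesis using frechet_derivative_works has_derivative_linear by simp blast
  qed
  have "mlin k (\<lambda>ws. frechet_derivative (\<lambda>z. higher_deriv k f z ws) (at y) w)" for w
    apply (rule deriv_mlin[OF assms(2) Suc.prems])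
    using Suc.IH assms(1) Suc.prems unfolding smooth_on_set_def by auto
  then show ?case using lin by simp
qed



lemma near_in_open:
  assumes "open V" "(g has_derivative g') (at x)" "g x \<in> V"
  obtains d where "d > 0" "\<And>x'. dist x' x < d \<Longrightarrow> g x' \<in> V"
proof -
  obtain e where e: "e > 0" "ball (g x) e \<subseteq> V" using assms(1,3) open_contains_ball by blast
  have "isCont g x" using assms(2) has_derivative_continuous by blast
  then obtain d where d: "d > 0" "\<And>x'. dist x' x < d \<Longrightarrow> dist (g x') (g x) < e"
    using e(1) unfolding continuous_at_eps_delta by blast
  have "\<And>x'. dist x' x < d \<Longrightarrow> g x' \<in> V" using d(2) e(2) by (auto simp: dist_commute subset_iff)
  then show ?thesis using that d(1) by blast
qed

lemma term_deriv:
  fixes \<Phi> :: "'b::euclidean_space \<Rightarrow> 'b list \<Rightarrow> 'c::real_normed_vector"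
    and g :: "'a::real_normed_vector \<Rightarrow> 'b"
    and wl :: "(('a \<Rightarrow> 'b) \<times> ('a \<Rightarrow> 'b)) list"
  assumes V: "open V" and g: "(g has_derivative g') (at x)" and gx: "g x \<in> V"
    and "\<forall>y\<in>V. mlin (length wl) (\<Phi> y)"
    and "\<forall>y\<in>V. \<forall>ws. length ws = length wl \<longrightarrow> ((\<lambda>z. \<Phi> z ws) has_derivative D\<Phi> y ws) (at y)"
    and "\<forall>i<length wl. (fst (wl!i) has_derivative snd (wl!i)) (at x)"
  shows "((\<lambda>x. \<Phi> (g x) (map (\<lambda>w. fst w x) wl)) has_derivative
     (\<lambda>v. D\<Phi> (g x) (map (\<lambda>w. fst w x) wl) (g' v)
        + (\<Sum>i<length wl. \<Phi> (g x) ((map (\<lambda>w. fst w x) wl)[i := snd (wl!i) v])))) (at x)"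
  using assms(4-6)
proof (induction wl arbitrary: \<Phi> D\<Phi>)
  case Nil
  have "((\<lambda>z. \<Phi> z []) has_derivative D\<Phi> (g x) []) (at (g x))" using Nil gx by auto
  from has_derivative_compose[OF g this] show ?case by simp
next
  case (Cons wp wl)
  obtain w w' where wp: "wp = (w, w')" by (cases wp)
  define r where "r = (\<lambda>x. map (\<lambda>w. fst w x) wl)"
  define n where "n = length wl"
  have lr: "length (r x') = n" for x' by (simp add: r_def n_def)
  have w: "(w has_derivative w') (at x)" using Cons.prems(3) wp by force
  have lin: "\<Phi> y (c # s) = (\<Sum>b\<in>Basis. (c \<bullet> b) *\<^sub>R \<Phi> y (b # s))" if "y \<in> V" "length s = n" for y c s
    using Cons.prems(1) that lin_expand[of "\<lambda>c. \<Phi> y (c # s)" c] by (auto simp: n_def)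
  have linD: "D\<Phi> (g x) (c # s) u = (\<Sum>b\<in>Basis. (c \<bullet> b) *\<^sub>R D\<Phi> (g x) (b # s) u)" if "length s = n" for c s u
  proof -
    have D1: "((\<lambda>z. \<Phi> z (b # s)) has_derivative D\<Phi> (g x) (b # s)) (at (g x))" for b
      using Cons.prems(2) gx that by (auto simp: n_def)
    have "((\<lambda>z. \<Sum>b\<in>Basis. (c \<bullet> b) *\<^sub>R \<Phi> z (b # s)) has_derivative (\<lambda>u. \<Sum>b\<in>Basis. (c \<bullet> b) *\<^sub>R D\<Phi> (g x) (b # s) u)) (at (g x))"
      by (intro has_derivative_sum has_derivative_scaleR_right D1)
    then have "((\<lambda>z. \<Phi> z (c # s)) has_derivative (\<lambda>u. \<Sum>b\<in>Basis. (c \<bullet> b) *\<^sub>R D\<Phi> (g x) (b # s) u)) (at (g x))"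
      by (rule has_derivative_transform_within_open[OF _ V gx]) (rule sym, erule lin, rule that)
    moreover have "((\<lambda>z. \<Phi> z (c # s)) has_derivative D\<Phi> (g x) (c # s)) (at (g x))"
      using Cons.prems(2) gx that by (auto simp: n_def)
    ultimately have "(\<lambda>u. \<Sum>b\<in>Basis. (c \<bullet> b) *\<^sub>R D\<Phi> (g x) (b # s) u) = D\<Phi> (g x) (c # s)"
      by (rule has_derivative_unique)
    from fun_cong[OF this, of u] show ?thesis by simp
  qed
  have IH: "((\<lambda>x. \<Phi> (g x) (b # r x)) has_derivative
     (\<lambda>v. D\<Phi> (g x) (b # r x) (g' v) + (\<Sum>i<n. \<Phi> (g x) (b # (r x)[i := snd (wl!i) v])))) (at x)" for b
  proof -
    have "\<forall>i<length wl. (fst (wl!i) has_derivative snd (wl!i)) (at x)"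
      using Cons.prems(3) by (metis Suc_less_eq length_Cons nth_Cons_Suc)
    then show ?thesis
      using Cons.IH[of "\<lambda>y s. \<Phi> y (b # s)" "\<lambda>y s. D\<Phi> y (b # s)"] Cons.prems(1,2)
      by (auto simp: r_def n_def)
  qed
  have "((\<lambda>x. \<Sum>b\<in>Basis. (w x \<bullet> b) *\<^sub>R \<Phi> (g x) (b # r x)) has_derivative
      (\<lambda>v. \<Sum>b\<in>Basis. (w x \<bullet> b) *\<^sub>R (D\<Phi> (g x) (b # r x) (g' v) + (\<Sum>i<n. \<Phi> (g x) (b # (r x)[i := snd (wl!i) v])))
          + (w' v \<bullet> b) *\<^sub>R \<Phi> (g x) (b # r x))) (at x)"
    by (intro has_derivative_sum has_derivative_scaleR IH has_derivative_inner_left w)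
  note Hs = this
  obtain d where d: "d > 0" "\<And>x'. dist x' x < d \<Longrightarrow> g x' \<in> V" using near_in_open[OF V g gx] by blast
  have H: "((\<lambda>x. \<Phi> (g x) (w x # r x)) has_derivative
      (\<lambda>v. \<Sum>b\<in>Basis. (w x \<bullet> b) *\<^sub>R (D\<Phi> (g x) (b # r x) (g' v) + (\<Sum>i<n. \<Phi> (g x) (b # (r x)[i := snd (wl!i) v])))
          + (w' v \<bullet> b) *\<^sub>R \<Phi> (g x) (b # r x))) (at x)"
    apply (rule has_derivative_transform_within[OF Hs d(1) UNIV_I])
    subgoal for x' by (rule sym, rule lin[OF d(2)[of x'] lr[of x']])
    done
  have eq: "(\<Sum>b\<in>Basis. (w x \<bullet> b) *\<^sub>R (D\<Phi> (g x) (b # r x) (g' v) + (\<Sum>i<n. \<Phi> (g x) (b # (r x)[i := snd (wl!i) v])))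
          + (w' v \<bullet> b) *\<^sub>R \<Phi> (g x) (b # r x))
      = D\<Phi> (g x) (w x # r x) (g' v) + (\<Sum>i<length (wp # wl). \<Phi> (g x) ((w x # r x)[i := snd ((wp # wl)!i) v]))" for v
  proof -
    have "(\<Sum>b\<in>Basis. (w x \<bullet> b) *\<^sub>R (D\<Phi> (g x) (b # r x) (g' v) + (\<Sum>i<n. \<Phi> (g x) (b # (r x)[i := snd (wl!i) v])))
          + (w' v \<bullet> b) *\<^sub>R \<Phi> (g x) (b # r x))
      = (\<Sum>b\<in>Basis. (w x \<bullet> b) *\<^sub>R D\<Phi> (g x) (b # r x) (g' v))
        + (\<Sum>i<n. \<Sum>b\<in>Basis. (w x \<bullet> b) *\<^sub>R \<Phi> (g x) (b # (r x)[i := snd (wl!i) v]))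
        + (\<Sum>b\<in>Basis. (w' v \<bullet> b) *\<^sub>R \<Phi> (g x) (b # r x))"
    proof -
      have sw: "(\<Sum>b\<in>Basis. (w x \<bullet> b) *\<^sub>R (\<Sum>i<n. \<Phi> (g x) (b # (r x)[i := snd (wl!i) v])))
         = (\<Sum>i<n. \<Sum>b\<in>Basis. (w x \<bullet> b) *\<^sub>R \<Phi> (g x) (b # (r x)[i := snd (wl!i) v]))"
        unfolding scaleR_sum_right by (rule sum.swap)
      show ?thesis unfolding scaleR_add_right sum.distrib sw ..
    qed
    also have "\<dots> = D\<Phi> (g x) (w x # r x) (g' v) + (\<Sum>i<n. \<Phi> (g x) (w x # (r x)[i := snd (wl!i) v]))
        + \<Phi> (g x) (w' v # r x)"
      using linD[OF lr[of x], where c="w x" and u="g' v"] lin[OF gx lr[of x], where c="w' v"] lin[OF gx, where c="w x"] lr by (simp add: lr)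
    also have "\<dots> = D\<Phi> (g x) (w x # r x) (g' v) + (\<Sum>i<length (wp # wl). \<Phi> (g x) ((w x # r x)[i := snd ((wp # wl)!i) v]))"
      unfolding length_Cons sum.lessThan_Suc_shift by (simp add: wp n_def add_ac)
    finally show ?thesis .
  qed
  show ?case using H unfolding eq by (simp add: wp r_def)
qed



definition ext :: "nat list list \<Rightarrow> nat list list list" where
  "ext p = (let q = map (map Suc) p in ([0] # q) # map (\<lambda>i. q[i := 0 # q!i]) [0..<length q])"

fun parts :: "nat \<Rightarrow> nat list list list" where
  "parts 0 = [[]]"
| "parts (Suc k) = concat (map ext (parts k))"

definition hterm :: "('b::real_normed_vector \<Rightarrow> 'c::real_normed_vector) \<Rightarrow> ('a::real_normed_vector \<Rightarrow> 'b) \<Rightarrow> nat list list \<Rightarrow> 'a \<Rightarrow> 'a list \<Rightarrow> 'c" where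
  "hterm f g p x vs = higher_deriv (length p) f (g x) (map (\<lambda>B. higher_deriv (length B) g x (map ((!) vs) B)) p)"

lemma smooth_D:
  assumes "smooth_on_set U f" "x \<in> U"
  shows "((\<lambda>y. higher_deriv (length vs) f y vs) has_derivative frechet_derivative (\<lambda>y. higher_deriv (length vs) f y vs) (at x)) (at x)"
  using assms unfolding smooth_on_set_def frechet_derivative_works by simp

lemma sum_list_map_upt: "sum_list (map f [0..<n]) = (\<Sum>i<n. f i)"
  by (induction n) auto

lemma sum_list_map_concat: "sum_list (map f (concat xss)) = sum_list (map (\<lambda>xs. sum_list (map f xs)) xss)"
  by (induction xss) auto

lemma has_derivative_sum_list:
  assumes "\<And>p. p \<in> set ps \<Longrightarrow> (F p has_derivative F' p) (at x)"
  shows "((\<lambda>y. sum_list (map (\<lambda>p. F p y) ps)) has_derivative (\<lambda>u. sum_list (map (\<lambda>p. F' p u) ps))) (at x)"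
  using assms
proof (induction ps)
  case Nil
  then show ?case by (simp add: has_derivative_const)
next
  case (Cons a ps)
  then show ?case by (simp add: has_derivative_add)
qed

lemma hterm_deriv:
  fixes f :: "'b::euclidean_space \<Rightarrow> 'c::real_normed_vector" and g :: "'a::real_normed_vector \<Rightarrow> 'b"
  assumes sf: "smooth_on_set V f" and sg: "smooth_on_set U g" and V: "open V"
    and gU: "g ` U \<subseteq> V" and x: "x \<in> U"
  shows "((\<lambda>x. hterm f g p x vs) has_derivative (\<lambda>v. sum_list (map (\<lambda>p'. hterm f g p' x (v # vs)) (ext p)))) (at x)"
proof -
  define wl where "wl = map (\<lambda>B. (\<lambda>y. higher_deriv (length B) g y (map ((!) vs) B),
      frechet_derivative (\<lambda>y. higher_deriv (length B) g y (map ((!) vs) B)) (at x))) p"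
  define j where "j = length p"
  have lwl: "length wl = j" by (simp add: wl_def j_def)
  have gd: "(g has_derivative frechet_derivative g (at x)) (at x)"
  proof -
    have "(\<lambda>y. higher_deriv 0 g y []) differentiable (at x)" using sg x unfolding smooth_on_set_def by blast
    then have "g differentiable (at x)" by simp
    then show ?thesis using frechet_derivative_works by blast
  qed
  have gx: "g x \<in> V" using gU x by auto
  have D: "((\<lambda>x. higher_deriv j f (g x) (map (\<lambda>w. fst w x) wl)) has_derivative
     (\<lambda>v. frechet_derivative (\<lambda>z. higher_deriv j f z (map (\<lambda>w. fst w x) wl)) (at (g x)) (frechet_derivative g (at x) v)
        + (\<Sum>i<length wl. higher_deriv j f (g x) ((map (\<lambda>w. fst w x) wl)[i := snd (wl!i) v])))) (at x)"
  proof (rule term_deriv[OF V gd gx])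
    show "\<forall>y\<in>V. mlin (length wl) (higher_deriv j f y)" using hd_mlin[OF sf V] lwl by simp
    show "\<forall>y\<in>V. \<forall>ws. length ws = length wl \<longrightarrow> ((\<lambda>z. higher_deriv j f z ws) has_derivative
        frechet_derivative (\<lambda>z. higher_deriv j f z ws) (at y)) (at y)"
    proof (intro ballI allI impI)
      fix y and ws :: "'b list" assume "y \<in> V" "length ws = length wl"
      then show "((\<lambda>z. higher_deriv j f z ws) has_derivative
        frechet_derivative (\<lambda>z. higher_deriv j f z ws) (at y)) (at y)"
        using smooth_D[OF sf, of y ws] lwl by simp
    qed
    show "\<forall>i<length wl. (fst (wl!i) has_derivative snd (wl!i)) (at x)"
    proof (intro allI impI)
      fix i assume i: "i < length wl"
      have "((\<lambda>y. higher_deriv (length (p!i)) g y (map ((!) vs) (p!i))) has_derivative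
         frechet_derivative (\<lambda>y. higher_deriv (length (p!i)) g y (map ((!) vs) (p!i))) (at x)) (at x)"
        using smooth_D[OF sg x, of "map ((!) vs) (p!i)"] by simp
      then show "(fst (wl!i) has_derivative snd (wl!i)) (at x)" using i by (simp add: wl_def)
    qed
  qed
  have mw: "map (\<lambda>w. fst w y) wl = map (\<lambda>B. higher_deriv (length B) g y (map ((!) vs) B)) p" for y
    by (simp add: wl_def)
  have eq: "frechet_derivative (\<lambda>z. higher_deriv j f z (map (\<lambda>w. fst w x) wl)) (at (g x)) (frechet_derivative g (at x) v)
        + (\<Sum>i<length wl. higher_deriv j f (g x) ((map (\<lambda>w. fst w x) wl)[i := snd (wl!i) v]))
      = sum_list (map (\<lambda>p'. hterm f g p' x (v # vs)) (ext p))" for v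
  proof -
    have e1: "hterm f g ([0] # map (map Suc) p) x (v # vs) =
       frechet_derivative (\<lambda>z. higher_deriv j f z (map (\<lambda>w. fst w x) wl)) (at (g x)) (frechet_derivative g (at x) v)"
      by (simp add: hterm_def mw j_def comp_def)
    have e2: "hterm f g ((map (map Suc) p)[i := 0 # (map (map Suc) p) ! i]) x (v # vs)
        = higher_deriv j f (g x) ((map (\<lambda>w. fst w x) wl)[i := snd (wl!i) v])" if "i < j" for i
      using that by (simp add: hterm_def mw j_def comp_def map_update wl_def)
    show ?thesis
      unfolding ext_def Let_def using e1 e2
      by (simp add: sum_list_map_upt lwl j_def)
  qed
  have heq: "higher_deriv j f (g y) (map (\<lambda>w. fst w y) wl) = hterm f g p y vs" for y
    by (simp add: hterm_def mw j_def)
  show ?thesis using D by (simp only: eq heq)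
qed

lemma deriv_from_formula:
  fixes f :: "'b::euclidean_space \<Rightarrow> 'c::real_normed_vector" and g :: "'a::real_normed_vector \<Rightarrow> 'b"
  assumes sf: "smooth_on_set V f" and sg: "smooth_on_set U g" and U: "open U" and V: "open V"
    and gU: "g ` U \<subseteq> V" and x: "x \<in> U"
    and F: "\<forall>y\<in>U. higher_deriv k (f \<circ> g) y vs = sum_list (map (\<lambda>p. hterm f g p y vs) (parts k))"
  shows "((\<lambda>y. higher_deriv k (f \<circ> g) y vs) has_derivative
     (\<lambda>u. sum_list (map (\<lambda>p. sum_list (map (\<lambda>p'. hterm f g p' x (u # vs)) (ext p))) (parts k)))) (at x)"
proof -
  have "((\<lambda>y. sum_list (map (\<lambda>p. hterm f g p y vs) (parts k))) has_derivative
     (\<lambda>u. sum_list (map (\<lambda>p. sum_list (map (\<lambda>p'. hterm f g p' x (u # vs)) (ext p))) (parts k)))) (at x)"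
    by (rule has_derivative_sum_list) (rule hterm_deriv[OF sf sg V gU x])
  then show ?thesis
    by (rule has_derivative_transform_within_open[OF _ U x]) (simp add: F)
qed

lemma comp_formula:
  fixes f :: "'b::euclidean_space \<Rightarrow> 'c::real_normed_vector" and g :: "'a::real_normed_vector \<Rightarrow> 'b"
  assumes sf: "smooth_on_set V f" and sg: "smooth_on_set U g" and U: "open U" and V: "open V"
    and gU: "g ` U \<subseteq> V"
  shows "\<forall>x\<in>U. \<forall>vs. length vs = k \<longrightarrow> higher_deriv k (f \<circ> g) x vs = sum_list (map (\<lambda>p. hterm f g p x vs) (parts k))"
proof (induction k)
  case 0
  then show ?case by (simp add: hterm_def)
next
  case (Suc k)
  show ?case
  proof (intro ballI allI impI)
    fix x and vs :: "'a list" assume x: "x \<in> U" and l: "length vs = Suc k"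
    then obtain v vs' where vs: "vs = v # vs'" and l': "length vs' = k" by (cases vs) auto
    have F: "\<forall>y\<in>U. higher_deriv k (f \<circ> g) y vs' = sum_list (map (\<lambda>p. hterm f g p y vs') (parts k))"
      using Suc.IH l' by blast
    have eqf: "frechet_derivative (\<lambda>y. higher_deriv k (f \<circ> g) y vs') (at x) =
     (\<lambda>u. sum_list (map (\<lambda>p. sum_list (map (\<lambda>p'. hterm f g p' x (u # vs')) (ext p))) (parts k)))"
      using frechet_derivative_at[OF deriv_from_formula[OF sf sg U V gU x F]] by (rule sym)
    show "higher_deriv (Suc k) (f \<circ> g) x vs = sum_list (map (\<lambda>p. hterm f g p x vs) (parts (Suc k)))"
      unfolding vs higher_deriv.simps list.sel eqf parts.simps sum_list_map_concat by (simp add: o_def)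
  qed
qed

lemma comp_smooth:
  fixes f :: "'b::euclidean_space \<Rightarrow> 'c::real_normed_vector" and g :: "'a::real_normed_vector \<Rightarrow> 'b"
  assumes sf: "smooth_on_set V f" and sg: "smooth_on_set U g" and U: "open U" and V: "open V"
    and gU: "g ` U \<subseteq> V"
  shows "smooth_on_set U (f \<circ> g)"
  unfolding smooth_on_set_def
proof (intro allI impI)
  fix k and vs :: "'a list" and x assume a: "length vs = k \<and> x \<in> U"
  have F: "\<forall>y\<in>U. higher_deriv k (f \<circ> g) y vs = sum_list (map (\<lambda>p. hterm f g p y vs) (parts k))"
    using comp_formula[OF sf sg U V gU] a by auto
  show "(\<lambda>y. higher_deriv k (f \<circ> g) y vs) differentiable at x"
    using deriv_from_formula[OF sf sg U V gU _ F] a unfolding differentiable_def by blast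
qed



definition wt :: "nat list list \<Rightarrow> real" where
  "wt p = fact (length p) * prod_list (map (\<lambda>B. fact (length B)) p)"

lemma sum_list_upd_Suc: "i < length xs \<Longrightarrow> sum_list (xs[i := Suc (xs!i)]) = Suc (sum_list xs)"
  by (induction xs arbitrary: i) (auto split: nat.split)

lemma prod_list_upd: "i < length xs \<Longrightarrow> prod_list (xs[i := y]) * xs!i = prod_list xs * (y :: 'a::comm_monoid_mult)"
  by (induction xs arbitrary: i) (auto split: nat.split simp: algebra_simps)

lemma length_le_sum: "(\<forall>B\<in>set p. B \<noteq> []) \<Longrightarrow> length p \<le> sum_list (map length p)"
proof (induction p)
  case (Cons a p)
  then show ?case by (cases a) auto
qed simp

definition pinv :: "nat \<Rightarrow> nat list list \<Rightarrow> bool" where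
  "pinv k p \<longleftrightarrow> (\<forall>B\<in>set p. B \<noteq> [] \<and> (\<forall>i\<in>set B. i < k)) \<and> sum_list (map length p) = k"

lemma pinv_ext:
  assumes "pinv k p" "p' \<in> set (ext p)"
  shows "pinv (Suc k) p'"
proof -
  define q where "q = map (map Suc) p"
  have q1: "\<forall>B\<in>set q. B \<noteq> [] \<and> (\<forall>i\<in>set B. i < Suc k)" using assms(1) by (auto simp: q_def pinv_def)
  have q2: "sum_list (map length q) = k" using assms(1) by (simp add: q_def pinv_def comp_def)
  have "p' = [0] # q \<or> (\<exists>i<length q. p' = q[i := 0 # q!i])"
    using assms(2) by (auto simp: ext_def q_def Let_def)
  then show ?thesis
  proof
    assume "p' = [0] # q" then show ?thesis using q1 q2 by (auto simp: pinv_def)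
  next
    assume "\<exists>i<length q. p' = q[i := 0 # q!i]"
    then obtain i where i: "i < length q" and p': "p' = q[i := 0 # q!i]" by blast
    have "\<forall>B\<in>set p'. B \<noteq> [] \<and> (\<forall>i\<in>set B. i < Suc k)"
    proof -
      have "set p' \<subseteq> insert (0 # q!i) (set q)" unfolding p' by (rule set_update_subset_insert)
      moreover have "q!i \<in> set q" using i by simp
      ultimately show ?thesis using q1 by fastforce
    qed
    moreover have "sum_list (map length p') = Suc k"
      using sum_list_upd_Suc[of i "map length q"] i q2 unfolding p' by (simp add: map_update)
    ultimately show ?thesis by (simp add: pinv_def)
  qed
qed

lemma parts_pinv: "p \<in> set (parts k) \<Longrightarrow> pinv k p"
proof (induction k arbitrary: p)
  case 0
  then show ?case by (simp add: pinv_def)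
next
  case (Suc k)
  then obtain p0 where "p0 \<in> set (parts k)" "p \<in> set (ext p0)" by auto
  then show ?case using Suc.IH pinv_ext by blast
qed

lemma prod_fact_pos: "prod_list (map (\<lambda>B. fact (length B) :: real) p) > 0"
  by (induction p) auto

lemma wt_pos: "wt p > 0"
  unfolding wt_def using prod_fact_pos[of p] by simp

lemma wt_ext:
  assumes "pinv k p"
  shows "sum_list (map wt (ext p)) \<le> wt p * (3 * Suc k)"
proof -
  define q where "q = map (map Suc) p"
  define j where "j = length p"
  have lq: "length q = j" by (simp add: q_def j_def)
  have mlq: "map (\<lambda>B. fact (length B)) q = map (\<lambda>B. fact (length B) :: real) p" by (simp add: q_def comp_def)
  have jk: "j \<le> k" using length_le_sum[of p] assms by (auto simp: pinv_def j_def)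
  have e1: "wt ([0] # q) = Suc j * wt p"
    by (simp add: wt_def mlq lq j_def)
  have e2: "wt (q[i := 0 # q!i]) = wt p * Suc (length (p!i))" if i: "i < j" for i
  proof -
    define xs where "xs = map (\<lambda>B. fact (length B) :: real) q"
    have lx: "i < length xs" using i lq by (simp add: xs_def)
    have xi: "xs!i = fact (length (p!i))" using i lq by (simp add: xs_def q_def j_def)
    have "map (\<lambda>B. fact (length B)) (q[i := 0 # q!i]) = xs[i := fact (Suc (length (p!i)))]"
      using i lq by (simp add: xs_def map_update q_def j_def)
    moreover have "prod_list (xs[i := fact (Suc (length (p!i)))]) = prod_list xs * Suc (length (p!i))"
    proof -
      have "prod_list (xs[i := fact (Suc (length (p!i)))]) * xs!i = (prod_list xs * Suc (length (p!i))) * xs!i"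
        using prod_list_upd[OF lx] xi by (simp add: algebra_simps)
      then show ?thesis using xi by simp
    qed
    ultimately show ?thesis using lq by (simp add: wt_def xs_def mlq j_def)
  qed
  have s2: "(\<Sum>i<j. wt (q[i := 0 # q!i])) = (\<Sum>i<j. wt p * Suc (length (p!i)))"
    by (rule sum.cong) (auto simp: e2)
  have "sum_list (map wt (ext p)) = Suc j * wt p + (\<Sum>i<j. wt p * Suc (length (p!i)))"
    unfolding s2[symmetric] by (simp add: ext_def Let_def e1 sum_list_map_upt lq flip: q_def)
  also have "(\<Sum>i<j. wt p * Suc (length (p!i))) = wt p * (j + k)"
  proof -
    have "(\<Sum>i<j. real (Suc (length (p!i)))) = real j + real (\<Sum>i<j. length (p!i))" by (simp add: sum.distrib)
    also have "(\<Sum>i<j. length (p!i)) = k"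
      using assms unfolding pinv_def sum_list_sum_nth by (simp add: j_def atLeast0LessThan)
    finally show ?thesis by (simp add: sum_distrib_left[symmetric])
  qed
  also have "Suc j * wt p + wt p * (j + k) = wt p * (2 * j + 1 + k)" by (simp add: algebra_simps)
  also have "\<dots> \<le> wt p * (3 * Suc k)"
    using jk wt_pos[of p] by (intro mult_left_mono) auto
  finally show ?thesis .
qed

lemma sum_list_mult_const: "sum_list (map (\<lambda>p. f p * (c::real)) xs) = sum_list (map f xs) * c"
  by (induction xs) (auto simp: algebra_simps)

lemma wt_sum: "sum_list (map wt (parts k)) \<le> 3 ^ k * fact k"
proof (induction k)
  case 0
  then show ?case by (simp add: wt_def)
next
  case (Suc k)
  have "sum_list (map wt (parts (Suc k))) = sum_list (map (\<lambda>p. sum_list (map wt (ext p))) (parts k))"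
    by (simp add: sum_list_map_concat o_def)
  also have "\<dots> \<le> sum_list (map (\<lambda>p. wt p * (3 * Suc k)) (parts k))"
    by (rule sum_list_mono) (rule wt_ext[OF parts_pinv])
  also have "\<dots> = sum_list (map wt (parts k)) * (3 * Suc k)" by (rule sum_list_mult_const)
  also have "\<dots> \<le> (3::real) ^ k * fact k * (3 * Suc k)" using Suc by (intro mult_right_mono) auto
  also have "\<dots> = 3 ^ Suc k * fact (Suc k)" by (simp add: algebra_simps)
  finally show ?case .
qed



lemma dn_bdd:
  fixes f :: "'a::euclidean_space \<Rightarrow> 'b::real_normed_vector"
  assumes "smooth_on_set V f" "open V" "y \<in> V"
  shows "bdd_above {norm (higher_deriv k f y vs) | vs. length vs = k \<and> (\<forall>v\<in>set vs. norm v \<le> 1)}"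
proof -
  obtain K where "\<forall>ws. length ws = k \<and> (\<forall>w\<in>set ws. norm w \<le> 1) \<longrightarrow> norm (higher_deriv k f y ws) \<le> K"
    using mlin_bounded[OF hd_mlin[OF assms]] by blast
  then show ?thesis unfolding bdd_above_def by blast
qed

lemma dn_upper:
  fixes f :: "'a::euclidean_space \<Rightarrow> 'b::real_normed_vector"
  assumes "smooth_on_set V f" "open V" "y \<in> V" "length vs = k" "\<forall>v\<in>set vs. norm v \<le> 1"
  shows "norm (higher_deriv k f y vs) \<le> deriv_norm k f y"
proof -
  have "norm (higher_deriv k f y vs) \<in> {norm (higher_deriv k f y vs) | vs. length vs = k \<and> (\<forall>v\<in>set vs. norm v \<le> 1)}"
    using assms(4,5) by blast
  then show ?thesis unfolding deriv_norm_def by (rule cSup_upper[OF _ dn_bdd[OF assms(1-3)]])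
qed

lemma dn_nonneg:
  fixes f :: "'a::euclidean_space \<Rightarrow> 'b::real_normed_vector"
  assumes "smooth_on_set V f" "open V" "y \<in> V"
  shows "0 \<le> deriv_norm k f y"
proof -
  have "norm (higher_deriv k f y (replicate k 0)) \<le> deriv_norm k f y" by (rule dn_upper[OF assms]) auto
  then show ?thesis using norm_ge_zero order.trans by metis
qed

lemma dn_homog:
  fixes f :: "'a::euclidean_space \<Rightarrow> 'b::real_normed_vector"
  assumes "smooth_on_set V f" "open V" "y \<in> V" "length ws = k"
  shows "norm (higher_deriv k f y ws) \<le> deriv_norm k f y * prod_list (map norm ws)"
  by (rule mlin_homog[OF hd_mlin[OF assms(1-3)] dn_upper[OF assms(1-3)] assms(4)])

lemma prod_list_mono_map:
  assumes "\<And>B. B \<in> set p \<Longrightarrow> 0 \<le> F B \<and> F B \<le> (G B :: real)"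
  shows "prod_list (map F p) \<le> prod_list (map G p)"
  using assms
proof (induction p)
  case (Cons a p)
  have "0 \<le> prod_list (map F p)" using Cons.prems by (intro prod_list_nonneg) auto
  moreover have "0 \<le> F a" "F a \<le> G a" using Cons.prems by auto
  moreover have "prod_list (map F p) \<le> prod_list (map G p)" using Cons by auto
  ultimately show ?case by (auto intro!: mult_mono)
qed simp

lemma norm_sum_list_le: "norm (sum_list (map F ps)) \<le> sum_list (map (\<lambda>p. norm (F p)) ps)"
  by (induction ps) (auto intro: order.trans[OF norm_triangle_ineq])

lemma prod_block:
  "prod_list (map (\<lambda>B. c * (fact (length B) * t ^ length B * M (length B))) p)
   = c ^ length p * t ^ sum_list (map length p) * prod_list (map (\<lambda>B. fact (length B) :: real) p)
     * prod_list (map (\<lambda>B. M (length B)) p)"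
  by (induction p) (auto simp: power_add algebra_simps)

lemma fin_comps: "finite {as :: nat list. (\<forall>a\<in>set as. 0 < a) \<and> sum_list as = k}"
proof (rule finite_subset[OF _ finite_lists_length_le[of "{..k}" k]])
  show "{as :: nat list. (\<forall>a\<in>set as. 0 < a) \<and> sum_list as = k} \<subseteq> {xs. set xs \<subseteq> {..k} \<and> length xs \<le> k}"
  proof
    fix as :: "nat list" assume "as \<in> {as :: nat list. (\<forall>a\<in>set as. 0 < a) \<and> sum_list as = k}"
    then have p: "\<forall>a\<in>set as. 0 < a" and s: "sum_list as = k" by auto
    have "set as \<subseteq> {..k}" using member_le_sum_list[of _ as] s by auto
    moreover have "length as \<le> sum_list as" using p by (induction as) auto
    ultimately show "as \<in> {xs. set xs \<subseteq> {..k} \<and> length xs \<le> k}" using s by auto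
  qed
qed simp

lemma fin_comp_vals: "finite {M (length as) * prod_list (map M as) | as. (\<forall>a\<in>set as. 0 < a) \<and> sum_list as = k}"
proof -
  have "{M (length as) * prod_list (map M as) | as. (\<forall>a\<in>set as. 0 < a) \<and> sum_list as = k}
    = (\<lambda>as. M (length as) * prod_list (map M as)) ` {as :: nat list. (\<forall>a\<in>set as. 0 < a) \<and> sum_list as = k}"
    by auto
  then show ?thesis using fin_comps by simp
qed

lemma comp_seq_ge:
  assumes "\<forall>a\<in>set as. 0 < a" "sum_list as = k" "k > 0"
  shows "M (length as) * prod_list (map M as) \<le> comp_seq M k"
  unfolding comp_seq_def using assms by (auto intro!: Max_ge fin_comp_vals)

lemma comp_seq_pos:
  assumes "\<And>k. M k > 0"
  shows "comp_seq M k > 0"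
proof (cases "k = 0")
  case True then show ?thesis by (simp add: comp_seq_def)
next
  case False
  have "M (length [k]) * prod_list (map M [k]) \<le> comp_seq M k"
    using False by (intro comp_seq_ge) auto
  moreover have "M (length [k]) * prod_list (map M [k]) > 0" using assms by simp
  ultimately show ?thesis by linarith
qed

lemma M_part:
  assumes "pinv k p" and Mpos: "\<And>k. M k > 0"
  shows "M (length p) * prod_list (map (\<lambda>B. M (length B)) p) \<le> max 1 (M 0) * comp_seq M k"
proof (cases "k = 0")
  case True
  then have "p = []" using assms by (auto simp: pinv_def)
  then show ?thesis using True by (simp add: comp_seq_def)
next
  case False
  have "M (length (map length p)) * prod_list (map M (map length p)) \<le> comp_seq M k"
    using assms False by (intro comp_seq_ge) (auto simp: pinv_def)
  then have a: "M (length p) * prod_list (map (\<lambda>B. M (length B)) p) \<le> comp_seq M k"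
    by (simp add: o_def)
  have "1 * comp_seq M k \<le> max 1 (M 0) * comp_seq M k"
    using comp_seq_pos[of M k] Mpos by (intro mult_right_mono) auto
  then show ?thesis using a by simp
qed



lemma main_bound:
  fixes f :: "'b::euclidean_space \<Rightarrow> 'c::euclidean_space" and g :: "'a::euclidean_space \<Rightarrow> 'b"
  assumes sf: "smooth_on_set V f" and sg: "smooth_on_set U g" and U: "open U" and V: "open V"
    and gU: "g ` U \<subseteq> V" and x: "x \<in> U" and Mpos: "\<And>k. M k > 0"
    and Bg: "\<And>a. deriv_norm a g x \<le> Bc * (fact a * \<tau> ^ a * M a)"
    and Af: "\<And>j. deriv_norm j f (g x) \<le> A * (fact j * \<sigma> ^ j * M j)"
    and A0: "0 \<le> A" and B0: "0 \<le> Bc" and s0: "0 < \<sigma>" and t0: "0 < \<tau>"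
  shows "deriv_norm k (f \<circ> g) x \<le> A * max 1 (M 0) * comp_seq M k * (max 1 (\<sigma> * Bc) * \<tau>) ^ k * (3 ^ k * fact k)"
proof -
  define E where "E = max 1 (\<sigma> * Bc)"
  define C0 where "C0 = A * max 1 (M 0) * comp_seq M k * (E * \<tau>) ^ k"
  have gx: "g x \<in> V" using gU x by auto
  have cpos: "comp_seq M k > 0" using comp_seq_pos[of M k] Mpos by blast
  have C0nn: "0 \<le> C0" unfolding C0_def E_def using A0 cpos t0 by (intro mult_nonneg_nonneg) auto
  have tb: "norm (hterm f g p x vs) \<le> C0 * wt p"
    if p: "p \<in> set (parts k)" and vs: "length vs = k" "\<forall>v\<in>set vs. norm v \<le> 1" for p and vs :: "'a list"
  proof -
    have pi: "pinv k p" using parts_pinv[OF p] .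
    define j where "j = length p"
    define ws where "ws = map (\<lambda>B. higher_deriv (length B) g x (map ((!) vs) B)) p"
    define PF where "PF = prod_list (map (\<lambda>B. fact (length B) :: real) p)"
    define PM where "PM = prod_list (map (\<lambda>B. M (length B)) p)"
    have jk: "j \<le> k" using length_le_sum[of p] pi by (auto simp: pinv_def j_def)
    have sl: "sum_list (map length p) = k" using pi by (simp add: pinv_def)
    have h1: "norm (hterm f g p x vs) \<le> deriv_norm j f (g x) * prod_list (map norm ws)"
      unfolding hterm_def j_def[symmetric] ws_def[symmetric] by (rule dn_homog[OF sf V gx]) (simp add: ws_def j_def)
    have h2: "prod_list (map norm ws) \<le> prod_list (map (\<lambda>B. Bc * (fact (length B) * \<tau> ^ length B * M (length B))) p)"
      unfolding ws_def map_map o_def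
    proof (rule prod_list_mono_map)
      fix B assume B: "B \<in> set p"
      have "\<forall>v\<in>set (map ((!) vs) B). norm v \<le> 1" using B pi vs by (auto simp: pinv_def)
      then have "norm (higher_deriv (length B) g x (map ((!) vs) B)) \<le> deriv_norm (length B) g x"
        by (intro dn_upper[OF sg U x]) auto
      then show "0 \<le> norm (higher_deriv (length B) g x (map ((!) vs) B)) \<and>
          norm (higher_deriv (length B) g x (map ((!) vs) B)) \<le> Bc * (fact (length B) * \<tau> ^ length B * M (length B))"
        using Bg[of "length B"] by auto
    qed
    have h2': "prod_list (map (\<lambda>B. Bc * (fact (length B) * \<tau> ^ length B * M (length B))) p) = Bc ^ j * \<tau> ^ k * PF * PM"
      using prod_block[of Bc \<tau> M p] sl by (simp add: j_def PF_def PM_def)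
    have dnn: "0 \<le> deriv_norm j f (g x)" by (rule dn_nonneg[OF sf V gx])
    have pnn: "0 \<le> prod_list (map norm ws)" by (intro prod_list_nonneg) auto
    have "norm (hterm f g p x vs) \<le> (A * (fact j * \<sigma> ^ j * M j)) * (Bc ^ j * \<tau> ^ k * PF * PM)"
    proof -
      have q0: "0 \<le> Bc ^ j * \<tau> ^ k * PF * PM" using pnn h2 h2' by linarith
      have "norm (hterm f g p x vs) \<le> deriv_norm j f (g x) * (Bc ^ j * \<tau> ^ k * PF * PM)"
        using h1 mult_left_mono[OF h2 dnn] unfolding h2' by (rule order.trans)
      also have "\<dots> \<le> (A * (fact j * \<sigma> ^ j * M j)) * (Bc ^ j * \<tau> ^ k * PF * PM)"
        by (rule mult_right_mono[OF Af q0])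
      finally show ?thesis .
    qed
    also have "\<dots> = A * \<tau> ^ k * wt p * (\<sigma> * Bc) ^ j * (M j * PM)"
      unfolding wt_def j_def[symmetric] PF_def[symmetric] by (simp add: power_mult_distrib mult_ac)
    also have "\<dots> \<le> A * \<tau> ^ k * wt p * E ^ k * (max 1 (M 0) * comp_seq M k)"
    proof -
      have X: "(\<sigma> * Bc) ^ j \<le> E ^ k"
      proof -
        have "(\<sigma> * Bc) ^ j \<le> E ^ j" using s0 B0 by (intro power_mono) (auto simp: E_def)
        also have "\<dots> \<le> E ^ k" using jk by (intro power_increasing) (auto simp: E_def)
        finally show ?thesis .
      qed
      have Y: "M j * PM \<le> max 1 (M 0) * comp_seq M k"
        using M_part[OF pi Mpos] by (simp add: j_def PM_def)
      have X0: "0 \<le> (\<sigma> * Bc) ^ j" using s0 B0 by simp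
      have Y0: "0 \<le> M j * PM" unfolding PM_def using Mpos
        by (intro mult_nonneg_nonneg prod_list_nonneg) (auto simp: less_imp_le)
      have Z0: "0 \<le> A * \<tau> ^ k * wt p" using A0 t0 wt_pos[of p] by simp
      have E0: "0 \<le> E ^ k" by (simp add: E_def)
      have "(\<sigma> * Bc) ^ j * (M j * PM) \<le> E ^ k * (max 1 (M 0) * comp_seq M k)"
        by (rule mult_mono[OF X Y E0 Y0])
      from mult_left_mono[OF this Z0] show ?thesis by (simp add: mult.assoc)
    qed
    also have "\<dots> = C0 * wt p" by (simp add: C0_def power_mult_distrib mult_ac)
    finally show ?thesis .
  qed
  show ?thesis unfolding deriv_norm_def
  proof (rule cSup_least)
    show "{norm (higher_deriv k (f \<circ> g) x vs) | vs. length vs = k \<and> (\<forall>v\<in>set vs. norm v \<le> 1)} \<noteq> {}"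
    proof -
      have "norm (higher_deriv k (f \<circ> g) x (replicate k 0)) \<in> {norm (higher_deriv k (f \<circ> g) x vs) | vs. length vs = k \<and> (\<forall>v\<in>set vs. norm v \<le> 1)}"
        by (intro CollectI exI[of _ "replicate k 0"]) auto
      then show ?thesis by blast
    qed
  next
    fix r assume "r \<in> {norm (higher_deriv k (f \<circ> g) x vs) | vs. length vs = k \<and> (\<forall>v\<in>set vs. norm v \<le> 1)}"
    then obtain vs where r: "r = norm (higher_deriv k (f \<circ> g) x vs)" and vs: "length vs = k" "\<forall>v\<in>set vs. norm v \<le> 1"
      by blast
    have "r = norm (sum_list (map (\<lambda>p. hterm f g p x vs) (parts k)))"
    proof -
      have "higher_deriv k (f \<circ> g) x vs = sum_list (map (\<lambda>p. hterm f g p x vs) (parts k))"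
        using comp_formula[OF sf sg U V gU] x vs(1) by blast
      then show ?thesis unfolding r by simp
    qed
    also have "\<dots> \<le> sum_list (map (\<lambda>p. norm (hterm f g p x vs)) (parts k))" by (rule norm_sum_list_le)
    also have "\<dots> \<le> sum_list (map (\<lambda>p. wt p * C0) (parts k))"
      by (rule sum_list_mono) (simp add: tb[OF _ vs] mult.commute)
    also have "\<dots> = sum_list (map wt (parts k)) * C0" by (rule sum_list_mult_const)
    also have "\<dots> \<le> (3 ^ k * fact k) * C0" using wt_sum C0nn by (rule mult_right_mono)
    also have "\<dots> = A * max 1 (M 0) * comp_seq M k * (max 1 (\<sigma> * Bc) * \<tau>) ^ k * (3 ^ k * fact k)"
      by (simp add: C0_def E_def mult_ac)
    finally show "r \<le> A * max 1 (M 0) * comp_seq M k * (max 1 (\<sigma> * Bc) * \<tau>) ^ k * (3 ^ k * fact k)" .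
  qed
qed



lemma get_bound:
  assumes "seminorm_finite N K \<rho> f" "\<And>k. N k > 0" "\<rho> > 0"
  shows "\<exists>A>0. \<forall>x\<in>K. \<forall>k. deriv_norm k f x \<le> A * (fact k * \<rho> ^ k * N k)"
proof -
  obtain A0 where A0: "\<And>r. r \<in> {deriv_norm k f x / (fact k * \<rho> ^ k * N k) | x k. x \<in> K} \<Longrightarrow> r \<le> A0"
    using assms(1) unfolding seminorm_finite_def bdd_above_def by blast
  have "deriv_norm k f x \<le> max A0 1 * (fact k * \<rho> ^ k * N k)" if x: "x \<in> K" for x k
  proof -
    have d: "fact k * \<rho> ^ k * N k > 0" using assms(2,3) by simp
    have "deriv_norm k f x / (fact k * \<rho> ^ k * N k) \<le> A0" using A0 x by blast
    then have "deriv_norm k f x \<le> A0 * (fact k * \<rho> ^ k * N k)" using d by (simp add: pos_divide_le_eq)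
    also have "\<dots> \<le> max A0 1 * (fact k * \<rho> ^ k * N k)" using d by (intro mult_right_mono) auto
    finally show ?thesis .
  qed
  moreover have "max A0 1 > 0" by simp
  ultimately show ?thesis by blast
qed

lemma mk_sem:
  assumes "\<forall>x\<in>K. \<forall>k. deriv_norm k f x \<le> A * (fact k * \<rho> ^ k * N k)" "\<And>k. N k > 0" "\<rho> > 0"
  shows "seminorm_finite N K \<rho> f"
  unfolding seminorm_finite_def bdd_above_def
proof (intro exI[of _ A] ballI)
  fix r assume "r \<in> {deriv_norm k f x / (fact k * \<rho> ^ k * N k) | x k. x \<in> K}"
  then obtain x k where r: "r = deriv_norm k f x / (fact k * \<rho> ^ k * N k)" and x: "x \<in> K" by blast
  have d: "fact k * \<rho> ^ k * N k > 0" using assms(2,3) by simp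
  show "r \<le> A" unfolding r using assms(1) x d by (simp add: pos_divide_le_eq)
qed

lemma smooth_cont:
  assumes "smooth_on_set U g"
  shows "continuous_on U g"
proof (rule continuous_at_imp_continuous_on, rule ballI)
  fix x assume "x \<in> U"
  from smooth_D[OF assms this, of "[]"] have "(g has_derivative frechet_derivative g (at x)) (at x)" by simp
  then show "isCont g x" by (rule has_derivative_continuous)
qed

lemma beur_comp:
  fixes f :: "'b::euclidean_space \<Rightarrow> 'c::euclidean_space" and g :: "'a::euclidean_space \<Rightarrow> 'b"
  assumes Mpos: "\<And>k. M k > 0" and U: "open U" and V: "open V"
    and g: "beurling_class M U V g" and f: "beurling_class M V W f"
  shows "beurling_class (comp_seq M) U W (f \<circ> g)"
proof -
  have gU: "g ` U \<subseteq> V" and sg: "smooth_on_set U g" using g by (auto simp: beurling_class_def)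
  have fV: "f ` V \<subseteq> W" and sf: "smooth_on_set V f" using f by (auto simp: beurling_class_def)
  have cpos: "\<And>k. comp_seq M k > 0" using comp_seq_pos Mpos by blast
  have "seminorm_finite (comp_seq M) K \<rho> (f \<circ> g)" if K: "compact K" "K \<subseteq> U" and \<rho>: "\<rho> > 0" for K \<rho>
  proof -
    define \<tau> where "\<tau> = \<rho> / 3"
    have t0: "\<tau> > 0" using \<rho> by (simp add: \<tau>_def)
    have tg: "seminorm_finite M K \<tau> g" using g K t0 unfolding beurling_class_def by blast
    obtain B0 where B0: "B0 > 0" "\<forall>x\<in>K. \<forall>a. deriv_norm a g x \<le> B0 * (fact a * \<tau> ^ a * M a)"
      using get_bound[OF tg Mpos t0] by blast
    define \<sigma> where "\<sigma> = 1 / B0"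
    have s0: "\<sigma> > 0" using B0 by (simp add: \<sigma>_def)
    have gK: "compact (g ` K)" "g ` K \<subseteq> V"
      using compact_continuous_image[OF continuous_on_subset[OF smooth_cont[OF sg] K(2)] K(1)] K gU by auto
    have sf': "seminorm_finite M (g ` K) \<sigma> f" using f gK s0 unfolding beurling_class_def by blast
    obtain A where A: "A > 0" "\<forall>y\<in>g ` K. \<forall>j. deriv_norm j f y \<le> A * (fact j * \<sigma> ^ j * M j)"
      using get_bound[OF sf' Mpos s0] by blast
    show ?thesis
    proof (rule mk_sem[OF _ cpos \<rho>], intro ballI allI)
      fix x k assume x: "x \<in> K"
      have "deriv_norm k (f \<circ> g) x \<le> A * max 1 (M 0) * comp_seq M k * (max 1 (\<sigma> * B0) * \<tau>) ^ k * (3 ^ k * fact k)"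
        using x K B0 A s0 t0 by (intro main_bound[OF sf sg U V gU _ Mpos]) auto
      also have "\<dots> = (A * max 1 (M 0)) * (fact k * \<rho> ^ k * comp_seq M k)"
      proof -
        have "\<sigma> * B0 = 1" using B0 by (simp add: \<sigma>_def)
        moreover have "\<tau> ^ k * 3 ^ k = \<rho> ^ k" by (simp add: \<tau>_def power_mult_distrib[symmetric])
        ultimately show ?thesis by (simp add: mult_ac)
      qed
      finally show "deriv_norm k (f \<circ> g) x \<le> (A * max 1 (M 0)) * (fact k * \<rho> ^ k * comp_seq M k)" .
    qed
  qed
  then show ?thesis using gU fV comp_smooth[OF sf sg U V gU] unfolding beurling_class_def by (auto simp: image_subset_iff)
qed

lemma roum_comp:
  fixes f :: "'b::euclidean_space \<Rightarrow> 'c::euclidean_space" and g :: "'a::euclidean_space \<Rightarrow> 'b"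
  assumes Mpos: "\<And>k. M k > 0" and U: "open U" and V: "open V"
    and g: "roumieu_class M U V g" and f: "roumieu_class M V W f"
  shows "roumieu_class (comp_seq M) U W (f \<circ> g)"
proof -
  have gU: "g ` U \<subseteq> V" and sg: "smooth_on_set U g" using g by (auto simp: roumieu_class_def)
  have fV: "f ` V \<subseteq> W" and sf: "smooth_on_set V f" using f by (auto simp: roumieu_class_def)
  have cpos: "\<And>k. comp_seq M k > 0" using comp_seq_pos Mpos by blast
  have "\<exists>\<rho>>0. seminorm_finite (comp_seq M) K \<rho> (f \<circ> g)" if K: "compact K" "K \<subseteq> U" for K
  proof -
    obtain \<tau> where t0: "\<tau> > 0" and tg: "seminorm_finite M K \<tau> g" using g K unfolding roumieu_class_def by blast
    obtain B0 where B0: "B0 > 0" "\<forall>x\<in>K. \<forall>a. deriv_norm a g x \<le> B0 * (fact a * \<tau> ^ a * M a)"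
      using get_bound[OF tg Mpos t0] by blast
    have gK: "compact (g ` K)" "g ` K \<subseteq> V"
      using compact_continuous_image[OF continuous_on_subset[OF smooth_cont[OF sg] K(2)] K(1)] K gU by auto
    obtain \<sigma> where s0: "\<sigma> > 0" and sf': "seminorm_finite M (g ` K) \<sigma> f" using f gK unfolding roumieu_class_def by blast
    obtain A where A: "A > 0" "\<forall>y\<in>g ` K. \<forall>j. deriv_norm j f y \<le> A * (fact j * \<sigma> ^ j * M j)"
      using get_bound[OF sf' Mpos s0] by blast
    define \<rho> where "\<rho> = max 1 (\<sigma> * B0) * \<tau> * 3"
    have \<rho>: "\<rho> > 0" using t0 by (simp add: \<rho>_def)
    have "seminorm_finite (comp_seq M) K \<rho> (f \<circ> g)"
    proof (rule mk_sem[OF _ cpos \<rho>], intro ballI allI)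
      fix x k assume x: "x \<in> K"
      have "deriv_norm k (f \<circ> g) x \<le> A * max 1 (M 0) * comp_seq M k * (max 1 (\<sigma> * B0) * \<tau>) ^ k * (3 ^ k * fact k)"
        using x K B0 A s0 t0 by (intro main_bound[OF sf sg U V gU _ Mpos]) auto
      also have "\<dots> = (A * max 1 (M 0)) * (fact k * \<rho> ^ k * comp_seq M k)"
        by (simp add: \<rho>_def power_mult_distrib mult_ac)
      finally show "deriv_norm k (f \<circ> g) x \<le> (A * max 1 (M 0)) * (fact k * \<rho> ^ k * comp_seq M k)" .
    qed
    then show ?thesis using \<rho> by blast
  qed
  then show ?thesis using gU fV comp_smooth[OF sf sg U V gU] unfolding roumieu_class_def by (auto simp: image_subset_iff)
qed

lemma fdb_bound:
  assumes "FdB_property M" "\<And>k. M k > 0"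
  shows "\<exists>C>0. \<forall>k. comp_seq M k \<le> max 1 (1 / M 0) * (C ^ k * M k)"
proof -
  obtain C where C: "C > 0" "\<And>k as. (\<forall>a\<in>set as. 0 < a) \<and> sum_list as = k \<Longrightarrow> M (length as) * prod_list (map M as) \<le> C ^ k * M k"
    using assms(1) unfolding FdB_property_def by blast
  have "comp_seq M k \<le> max 1 (1 / M 0) * (C ^ k * M k)" for k
  proof (cases "k = 0")
    case True
    have "1 \<le> max 1 (1 / M 0) * M 0"
    proof -
      have "1 = (1 / M 0) * M 0" using assms(2)[of 0] by simp
      also have "\<dots> \<le> max 1 (1 / M 0) * M 0" using assms(2)[of 0] by (intro mult_right_mono) auto
      finally show ?thesis .
    qed
    then show ?thesis using True by (simp add: comp_seq_def)
  next
    case False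
    have ne: "{M (length as) * prod_list (map M as) | as. (\<forall>a\<in>set as. 0 < a) \<and> sum_list as = k} \<noteq> {}"
    proof -
      have "M (length [k]) * prod_list (map M [k]) \<in> {M (length as) * prod_list (map M as) | as. (\<forall>a\<in>set as. 0 < a) \<and> sum_list as = k}"
        using False by (intro CollectI exI[of _ "[k]"]) auto
      then show ?thesis by blast
    qed
    have "comp_seq M k \<le> C ^ k * M k"
      unfolding comp_seq_def using False C(2) by (auto simp: Max_le_iff[OF fin_comp_vals ne])
    also have "1 * (C ^ k * M k) \<le> max 1 (1 / M 0) * (C ^ k * M k)"
      using C(1) assms(2)[of k] by (intro mult_right_mono) auto
    finally show ?thesis by simp
  qed
  then show ?thesis using C(1) by blast
qed

lemma sem_mono:
  assumes "\<forall>k. N' k \<le> c * (C ^ k * N k)" "c > 0" "C > 0" "\<And>k. N' k > 0" "\<And>k. N k > 0"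
    and "seminorm_finite N' K \<rho> h" "\<rho> > 0"
  shows "seminorm_finite N K (\<rho> * C) h"
proof -
  obtain A where A: "A > 0" "\<forall>x\<in>K. \<forall>k. deriv_norm k h x \<le> A * (fact k * \<rho> ^ k * N' k)"
    using get_bound[OF assms(6,4,7)] by blast
  show ?thesis
  proof (rule mk_sem[OF _ assms(5)], intro ballI allI)
    fix x k assume x: "x \<in> K"
    have "deriv_norm k h x \<le> A * (fact k * \<rho> ^ k * N' k)" using A x by blast
    also have "\<dots> \<le> A * (fact k * \<rho> ^ k * (c * (C ^ k * N k)))"
      using assms(1) A(1) assms(7) by (intro mult_left_mono) auto
    also have "\<dots> = (A * c) * (fact k * (\<rho> * C) ^ k * N k)" by (simp add: power_mult_distrib mult_ac)
    finally show "deriv_norm k h x \<le> (A * c) * (fact k * (\<rho> * C) ^ k * N k)" .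
  qed (use assms in simp)
qed



theorem proposition3p1:
  fixes M :: "nat \<Rightarrow> real"
    and U :: "'a::euclidean_space set" and V :: "'b::euclidean_space set" and W :: "'c::euclidean_space set"
  assumes M_pos: "\<And>k. M k > 0"
    and U_open: "open U" and V_open: "open V" and W_open: "open W"
  shows "(\<forall>(g::'a \<Rightarrow> 'b) (f::'b \<Rightarrow> 'c). beurling_class M U V g \<and> beurling_class M V W f
            \<longrightarrow> beurling_class (comp_seq M) U W (f \<circ> g))
       \<and> (\<forall>(g::'a \<Rightarrow> 'b) (f::'b \<Rightarrow> 'c). roumieu_class M U V g \<and> roumieu_class M V W f
            \<longrightarrow> roumieu_class (comp_seq M) U W (f \<circ> g))
       \<and> (FdB_property M \<longrightarrow>
            (\<forall>(g::'a \<Rightarrow> 'b) (f::'b \<Rightarrow> 'c). beurling_class M U V g \<and> beurling_class M V W f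
              \<longrightarrow> beurling_class M U W (f \<circ> g))
          \<and> (\<forall>(g::'a \<Rightarrow> 'b) (f::'b \<Rightarrow> 'c). roumieu_class M U V g \<and> roumieu_class M V W f
              \<longrightarrow> roumieu_class M U W (f \<circ> g)))"
proof (intro conjI allI impI)
  fix g :: "'a \<Rightarrow> 'b" and f :: "'b \<Rightarrow> 'c"
  assume "beurling_class M U V g \<and> beurling_class M V W f"
  then show "beurling_class (comp_seq M) U W (f \<circ> g)" by (intro beur_comp[of M, OF M_pos U_open V_open]) (erule conjE, assumption)+
next
  fix g :: "'a \<Rightarrow> 'b" and f :: "'b \<Rightarrow> 'c"
  assume "roumieu_class M U V g \<and> roumieu_class M V W f"
  then show "roumieu_class (comp_seq M) U W (f \<circ> g)" by (intro roum_comp[of M, OF M_pos U_open V_open]) (erule conjE, assumption)+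
next
  fix g :: "'a \<Rightarrow> 'b" and f :: "'b \<Rightarrow> 'c"
  assume fdb: "FdB_property M" and a: "beurling_class M U V g \<and> beurling_class M V W f"
  obtain C where C: "C > 0" "\<forall>k. comp_seq M k \<le> max 1 (1 / M 0) * (C ^ k * M k)"
    using fdb_bound[of M, OF fdb M_pos] by auto
  have cpos: "\<And>k. comp_seq M k > 0" by (rule comp_seq_pos, rule M_pos)
  have b: "beurling_class (comp_seq M) U W (f \<circ> g)" using a by (intro beur_comp[of M, OF M_pos U_open V_open]) (erule conjE, assumption)+
  have "seminorm_finite M K \<rho> (f \<circ> g)" if K: "compact K" "K \<subseteq> U" and \<rho>: "\<rho> > 0" for K \<rho>
  proof -
    have "\<rho> / C > 0" using \<rho> C(1) by simp
    then have "seminorm_finite (comp_seq M) K (\<rho> / C) (f \<circ> g)" using b K unfolding beurling_class_def by blast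
    from sem_mono[OF C(2) _ C(1) cpos M_pos this \<open>\<rho> / C > 0\<close>] have "seminorm_finite M K (\<rho> / C * C) (f \<circ> g)" by simp
    then show ?thesis using C(1) by simp
  qed
  moreover have "(f \<circ> g) ` U \<subseteq> W" "smooth_on_set U (f \<circ> g)" using b unfolding beurling_class_def by auto
  ultimately show "beurling_class M U W (f \<circ> g)" unfolding beurling_class_def by auto
next
  fix g :: "'a \<Rightarrow> 'b" and f :: "'b \<Rightarrow> 'c"
  assume fdb: "FdB_property M" and a: "roumieu_class M U V g \<and> roumieu_class M V W f"
  obtain C where C: "C > 0" "\<forall>k. comp_seq M k \<le> max 1 (1 / M 0) * (C ^ k * M k)"
    using fdb_bound[of M, OF fdb M_pos] by auto
  have cpos: "\<And>k. comp_seq M k > 0" by (rule comp_seq_pos, rule M_pos)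
  have b: "roumieu_class (comp_seq M) U W (f \<circ> g)" using a by (intro roum_comp[of M, OF M_pos U_open V_open]) (erule conjE, assumption)+
  have "\<exists>\<rho>>0. seminorm_finite M K \<rho> (f \<circ> g)" if K: "compact K" "K \<subseteq> U" for K
  proof -
    obtain \<rho> where \<rho>: "\<rho> > 0" "seminorm_finite (comp_seq M) K \<rho> (f \<circ> g)"
      using b K unfolding roumieu_class_def by blast
    have "seminorm_finite M K (\<rho> * C) (f \<circ> g)" by (rule sem_mono[OF C(2) _ C(1) cpos M_pos \<rho>(2) \<rho>(1)]) simp
    moreover have "\<rho> * C > 0" using \<rho> C by simp
    ultimately show ?thesis by blast
  qed
  moreover have "(f \<circ> g) ` U \<subseteq> W" "smooth_on_set U (f \<circ> g)" using b unfolding roumieu_class_def by auto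
  ultimately show "roumieu_class M U W (f \<circ> g)" unfolding roumieu_class_def by auto
qed

end
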